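(* For any stochastic CA $\mathcal{A}=(Q,R,V,V',f)$ there is a plain probabilistic cellular automaton (PCA) $\mathcal{B}$ such that $\mathcal{A}\sqsubseteq^S_i\mathcal{B}$.
   Context: A stochastic CA is $(Q,R,V,V',f)$ with $Q$ finite states, $R$ finite random symbols, $V=\{v_1,\dots,v_r\}$, $V'=\{v'_1,\dots,v'_{r'}\}$ finite subsets of $\mathbb{Z}$, $f:Q^r\times R^{r'}\to Q$; explicit global function $F(c,s)_z=f((c_{z+v_1},\dots,c_{z+v_r}),(s_{z+v'_1},\dots,s_{z+v'_{r'}}))$ for $c\in Q^{\mathbb{Z}},s\in R^{\mathbb{Z}}$. It is a PCA if $V'=\{0\}$. $\nu_R$ is the uniform Bernoulli measure on $R^{\mathbb{Z}}$; the stochastic global function $S_F$ maps $c$ to the law of $F(c,s)$, $s\sim\nu_R$ (i.e. $S_F(c)([u]_z)=\nu_R\{s:F(c,s)\in[u]_z\}$ on cylinders $[u]_z$). Iterates: $F^{t+1}(c,s^1,\dots,s^{t+1})=F(F^t(c,s^1,\dots,s^t),s^{t+1})$, $F^0(c)=c$. Restriction: if $i:Q'\to Q$ is injective and $Y=i(Q')^{\mathbb{Z}}$ satisfies $F(Y,R^{\mathbb{Z}})\subseteq Y$, the $i$-restriction of $\mathcal{A}$ is the stochastic CA with states $Q'$, random symbols $R$ and explicit global function $F_i(c,s)=I^{-1}(F(I(c),s))$, $I$ the cellwise extension of $i$. Rescaling: for $m,t\ge1$, $k\in\mathbb{Z}$, the rescaling $\mathcal{A}^{\langle m,t,k\rangle}$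 has states $Q^m$, random symbols $(R^m)^t$, and explicit global function $F^{\langle m,t,k\rangle}(c,s)=b_m\circ\sigma_k\circ F^t(b_m^{-1}(c),b_m^{-1}(s^1),\dots,b_m^{-1}(s^t))$, where $s^i\in(R^m)^{\mathbb{Z}}$ with $s^i_j=(s_j)_i$, $\sigma_k(c)_z=c_{z+k}$, and $b_m(c)_z=(c_{mz},\dots,c_{mz+m-1})$. $\mathcal{A}_1\sqsubseteq^S_i\mathcal{A}_2$ means there exist $m_1,m_2,t_1,t_2,k_1,k_2$ and an $i$-restriction $\mathcal{C}$ of $\mathcal{A}_2^{\langle m_2,t_2,k_2\rangle}$ such that $\mathcal{A}_1^{\langle m_1,t_1,k_1\rangle}$ and $\mathcal{C}$ have the same stochastic global function. *)

theory Defs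
  imports "HOL-Probability.Probability"
begin

text \<open>A stochastic CA (Q,R,V,V',f). Neighbourhoods are given as lists of distinct
  integers (v_1,...,v_r), and the local rule takes the tuples of states / random
  symbols as lists in that order.\<close>
record ('q, 'r) sca =
  sQ  :: "'q set"
  sR  :: "'r set"
  sV  :: "int list"
  sV' :: "int list"
  sf  :: "'q list \<Rightarrow> 'r list \<Rightarrow> 'q"

definition is_sca :: "('q, 'r) sca \<Rightarrow> bool" where
  "is_sca A \<longleftrightarrow> finite (sQ A) \<and> sQ A \<noteq> {} \<and> finite (sR A) \<and> sR A \<noteq> {}
     \<and> distinct (sV A) \<and> distinct (sV' A)
     \<and> (\<forall>xs ys. length xs = length (sV A) \<and> set xs \<subseteq> sQ A
              \<and> length ys = length (sV' A) \<and> set ys \<subseteq> sR A \<longrightarrow> sf A xs ys \<in> sQ A)"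

definition is_pca :: "('q, 'r) sca \<Rightarrow> bool" where
  "is_pca A \<longleftrightarrow> is_sca A \<and> sV' A = [0]"

definition glob :: "('q, 'r) sca \<Rightarrow> (int \<Rightarrow> 'q) \<Rightarrow> (int \<Rightarrow> 'r) \<Rightarrow> (int \<Rightarrow> 'q)" where
  "glob A c s = (\<lambda>z. sf A (map (\<lambda>v. c (z + v)) (sV A)) (map (\<lambda>v. s (z + v)) (sV' A)))"

text \<open>A "system" given by its state set, random symbol set and explicit global function
  (this is all that rescalings / restrictions are specified by).\<close>
record ('q, 'r) gsys =
  gQ :: "'q set"
  gR :: "'r set"
  gF :: "(int \<Rightarrow> 'q) \<Rightarrow> (int \<Rightarrow> 'r) \<Rightarrow> (int \<Rightarrow> 'q)"

definition sys_of :: "('q, 'r) sca \<Rightarrow> ('q, 'r) gsys" where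
  "sys_of A = \<lparr>gQ = sQ A, gR = sR A, gF = glob A\<rparr>"

definition configs :: "'a set \<Rightarrow> (int \<Rightarrow> 'a) set" where
  "configs S = {c. \<forall>z. c z \<in> S}"

definition sgf :: "('q, 'r) gsys \<Rightarrow> (int \<Rightarrow> 'q) \<Rightarrow> (int \<Rightarrow> 'q) measure" where
  "sgf G c = distr (PiM (UNIV :: int set) (\<lambda>_. uniform_count_measure (gR G)))
                   (PiM (UNIV :: int set) (\<lambda>_. count_space (gQ G)))
                   (\<lambda>s. gF G c s)"

text \<open>Iterates: F^0(c) = c, F^(t+1)(c,s^1..s^(t+1)) = F(F^t(c,s^1..s^t), s^(t+1));
  here ss n plays the role of s^(n+1).\<close>
primrec iterF :: "((int \<Rightarrow> 'q) \<Rightarrow> (int \<Rightarrow> 'r) \<Rightarrow> (int \<Rightarrow> 'q)) \<Rightarrow> (int \<Rightarrow> 'q)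
                   \<Rightarrow> (nat \<Rightarrow> int \<Rightarrow> 'r) \<Rightarrow> nat \<Rightarrow> (int \<Rightarrow> 'q)" where
  "iterF F c ss 0 = c"
| "iterF F c ss (Suc t) = F (iterF F c ss t) (ss t)"

definition tuples :: "nat \<Rightarrow> 'a set \<Rightarrow> 'a list set" where
  "tuples m S = {xs. length xs = m \<and> set xs \<subseteq> S}"

definition block :: "nat \<Rightarrow> (int \<Rightarrow> 'a) \<Rightarrow> (int \<Rightarrow> 'a list)" where
  "block m c = (\<lambda>z. map (\<lambda>j. c (int m * z + int j)) [0..<m])"

definition unblock :: "nat \<Rightarrow> (int \<Rightarrow> 'a list) \<Rightarrow> (int \<Rightarrow> 'a)" where
  "unblock m c = (\<lambda>z. c (z div int m) ! nat (z mod int m))"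

definition shift :: "int \<Rightarrow> (int \<Rightarrow> 'a) \<Rightarrow> (int \<Rightarrow> 'a)" where
  "shift k c = (\<lambda>z. c (z + k))"

text \<open>Rescaling A^<m,t,k>: states Q^m, random symbols (R^m)^t (a list of length t of
  lists of length m); s^i_j = (s_j)_i.\<close>
definition rescale :: "('q, 'r) sca \<Rightarrow> nat \<Rightarrow> nat \<Rightarrow> int \<Rightarrow> ('q list, 'r list list) gsys" where
  "rescale A m t k = \<lparr>gQ = tuples m (sQ A), gR = tuples t (tuples m (sR A)),
     gF = (\<lambda>c s. block m (shift k
             (iterF (glob A) (unblock m c) (\<lambda>n. unblock m (\<lambda>j. s j ! n)) t)))\<rparr>"

definition is_restriction :: "('q, 'r) gsys \<Rightarrow> 'a set \<Rightarrow> ('a \<Rightarrow> 'q) \<Rightarrow> bool" where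
  "is_restriction G Q' i \<longleftrightarrow> inj_on i Q' \<and> i ` Q' \<subseteq> gQ G
     \<and> (\<forall>c \<in> configs (i ` Q'). \<forall>s \<in> configs (gR G). gF G c s \<in> configs (i ` Q'))"

definition restrict :: "('q, 'r) gsys \<Rightarrow> 'a set \<Rightarrow> ('a \<Rightarrow> 'q) \<Rightarrow> ('a, 'r) gsys" where
  "restrict G Q' i = \<lparr>gQ = Q', gR = gR G,
     gF = (\<lambda>c s. (\<lambda>z. the_inv_into Q' i (gF G (i \<circ> c) s z)))\<rparr>"

definition simulates_S :: "('q, 'r) sca \<Rightarrow> ('a, 'b) sca \<Rightarrow> ('q list \<Rightarrow> 'a list) \<Rightarrow> bool" where
  "simulates_S A1 A2 i \<longleftrightarrow> (\<exists>m1 m2 t1 t2 k1 k2.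
     m1 \<ge> 1 \<and> m2 \<ge> 1 \<and> t1 \<ge> 1 \<and> t2 \<ge> 1
     \<and> is_restriction (rescale A2 m2 t2 k2) (gQ (rescale A1 m1 t1 k1)) i
     \<and> (\<forall>c \<in> configs (gQ (rescale A1 m1 t1 k1)).
          sgf (rescale A1 m1 t1 k1) c
          = sgf (restrict (rescale A2 m2 t2 k2) (gQ (rescale A1 m1 t1 k1)) i) c))"

end

theory Submission
  imports Defs
begin


lemma measurable_PiM_map:
  assumes f: "f \<in> measurable M N"
  shows "(\<lambda>s i. f (s i)) \<in> measurable (PiM UNIV (\<lambda>_::'i. M)) (PiM UNIV (\<lambda>_. N))"
proof (rule measurable_PiM_single')
  fix i :: 'i
  show "(\<lambda>s. f (s i)) \<in> measurable (PiM UNIV (\<lambda>_. M)) N"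
    using measurable_compose[OF measurable_component_singleton[of i UNIV "\<lambda>_. M"] f] by simp
next
  show "(\<lambda>s i. f (s i)) \<in> space (PiM UNIV (\<lambda>_. M)) \<rightarrow> (\<Pi>\<^sub>E i\<in>UNIV. space N)"
    using measurable_space[OF f] by (auto simp: space_PiM)
qed

lemma distr_PiM_UNIV_map:
  assumes M: "prob_space M" and N: "prob_space N" and f: "f \<in> measurable M N"
    and eq: "distr M N f = N"
  shows "distr (PiM UNIV (\<lambda>_::'i. M)) (PiM UNIV (\<lambda>_. N)) (\<lambda>s i. f (s i)) = PiM UNIV (\<lambda>_. N)"
proof (rule measure_eqI_PiM_infinite[symmetric, OF refl])
  show "sets (distr (PiM UNIV (\<lambda>_::'i. M)) (PiM UNIV (\<lambda>_. N)) (\<lambda>s i. f (s i))) = sets (PiM UNIV (\<lambda>_. N))"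
    by simp
  interpret prob_space "PiM UNIV (\<lambda>_::'i. N)" using N by (intro prob_space_PiM) auto
  show "finite_measure (PiM UNIV (\<lambda>_::'i. N))" by unfold_locales
  fix J :: "'i set" and A assume J: "finite J" "J \<subseteq> UNIV" and A: "\<And>i. i \<in> J \<Longrightarrow> A i \<in> sets N"
  have "emeasure (PiM UNIV (\<lambda>_. N)) (prod_emb UNIV (\<lambda>_. N) J (Pi\<^sub>E J A)) = (\<Prod>j\<in>J. emeasure N (A j))"
    using N J A by (intro emeasure_PiM_emb) auto
  also have "\<dots> = (\<Prod>j\<in>J. emeasure M (f -` A j \<inter> space M))"
  proof (rule prod.cong[OF refl])
    fix j assume "j \<in> J"
    have "emeasure N (A j) = emeasure (distr M N f) (A j)" using eq by simp
    also have "\<dots> = emeasure M (f -` A j \<inter> space M)"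
      using A[OF \<open>j\<in>J\<close>] f by (simp add: emeasure_distr)
    finally show "emeasure N (A j) = emeasure M (f -` A j \<inter> space M)" .
  qed
  also have "\<dots> = emeasure (PiM UNIV (\<lambda>_. M)) (prod_emb UNIV (\<lambda>_. M) J (Pi\<^sub>E J (\<lambda>j. f -` A j \<inter> space M)))"
    using M J A f by (intro emeasure_PiM_emb[symmetric]) (auto intro: measurable_sets)
  also have "prod_emb UNIV (\<lambda>_. M) J (Pi\<^sub>E J (\<lambda>j. f -` A j \<inter> space M))
      = (\<lambda>s i. f (s i)) -` prod_emb UNIV (\<lambda>_. N) J (Pi\<^sub>E J A) \<inter> space (PiM UNIV (\<lambda>_. M))"
    using measurable_space[OF f] by (auto simp: prod_emb_def space_PiM PiE_iff)
  also have "emeasure (PiM UNIV (\<lambda>_. M)) \<dots> = emeasure (distr (PiM UNIV (\<lambda>_::'i. M)) (PiM UNIV (\<lambda>_. N)) (\<lambda>s i. f (s i))) (prod_emb UNIV (\<lambda>_. N) J (Pi\<^sub>E J A))"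
    using J A by (intro emeasure_distr[symmetric] measurable_PiM_map f sets_PiM_I) auto
  finally show "emeasure (PiM UNIV (\<lambda>_. N)) (prod_emb UNIV (\<lambda>_. N) J (Pi\<^sub>E J A)) = emeasure (distr (PiM UNIV (\<lambda>_::'i. M)) (PiM UNIV (\<lambda>_. N)) (\<lambda>s i. f (s i))) (prod_emb UNIV (\<lambda>_. N) J (Pi\<^sub>E J A))" .
qed


fun idx :: "int list \<Rightarrow> int \<Rightarrow> nat" where
  "idx [] v = 0" | "idx (x # xs) v = (if x = v then 0 else Suc (idx xs v))"

lemma idx_less: "v \<in> set L \<Longrightarrow> idx L v < length L"
  by (induction L) auto
lemma nth_idx: "v \<in> set L \<Longrightarrow> L ! idx L v = v"
  by (induction L) auto

definition W :: "('q,'r) sca \<Rightarrow> int list" where "W A = remdups (0 # sV A @ sV' A)"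
definition q0 :: "('q,'r) sca \<Rightarrow> 'q" where "q0 A = (SOME q. q \<in> sQ A)"
definition r0 :: "('q,'r) sca \<Rightarrow> 'r" where "r0 A = (SOME r. r \<in> sR A)"
definition dec :: "('q,'r) sca \<Rightarrow> ('q+'r) list \<Rightarrow> 'r" where
  "dec A y = (case y of [Inr r] \<Rightarrow> r | _ \<Rightarrow> r0 A)"
definition getq :: "('q,'r) sca \<Rightarrow> ('q+'r) list \<Rightarrow> 'q" where
  "getq A l = (case l of Inl q # _ \<Rightarrow> q | _ \<Rightarrow> q0 A)"
definition getr :: "('q,'r) sca \<Rightarrow> ('q+'r) list \<Rightarrow> 'r" where
  "getr A l = dec A (tl l)"
definition fB :: "('q,'r) sca \<Rightarrow> ('q+'r) list list \<Rightarrow> ('q+'r) list list \<Rightarrow> ('q+'r) list" where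
  "fB A xs ys = (if length (xs ! idx (W A) 0) = 1 then xs ! idx (W A) 0 @ hd ys
     else [Inl (sf A (map (\<lambda>v. getq A (xs ! idx (W A) v)) (sV A)) (map (\<lambda>v. getr A (xs ! idx (W A) v)) (sV' A)))])"
definition RB :: "('q,'r) sca \<Rightarrow> ('q+'r) list set" where "RB A = (\<lambda>r. [Inr r]) ` sR A"
definition QB :: "('q,'r) sca \<Rightarrow> ('q+'r) list set" where
  "QB A = (\<lambda>q. [Inl q]) ` sQ A \<union> (\<lambda>(q,r). [Inl q, Inr r]) ` (sQ A \<times> sR A)"
definition B :: "('q,'r) sca \<Rightarrow> (('q+'r) list, ('q+'r) list) sca" where
  "B A = \<lparr>sQ = QB A, sR = RB A, sV = W A, sV' = [0], sf = fB A\<rparr>"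
definition iB :: "'q list \<Rightarrow> ('q+'r) list list" where "iB xs = [map Inl xs]"

lemma tuples1: "tuples 1 S = (\<lambda>a. [a]) ` S"
  by (auto simp: tuples_def length_Suc_conv)
lemma tuples1': "tuples (Suc 0) S = (\<lambda>a. [a]) ` S"
  using tuples1 by simp
lemma tuples2: "tuples 2 S = (\<lambda>(a,b). [a,b]) ` (S \<times> S)"
  by (auto simp: tuples_def length_Suc_conv numeral_2_eq_2)

lemma block1[simp]: "block (Suc 0) c = (\<lambda>z. [c z])" by (simp add: block_def)
lemma unblock1[simp]: "unblock (Suc 0) c = (\<lambda>z. c z ! 0)" by (simp add: unblock_def)
lemma shift0[simp]: "shift 0 c = c" by (simp add: shift_def)

lemma nth_index_map[simp]: "v \<in> set L \<Longrightarrow> map g L ! idx L v = g v"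
  by (simp add: idx_less nth_idx)

lemma B_sca: fixes A :: "('q,'r) sca" assumes "is_sca A" shows "is_pca (B A)"
proof -
  have q0: "q0 A \<in> sQ A" and r0: "r0 A \<in> sR A" using assms
    unfolding q0_def r0_def is_sca_def by (auto intro: someI_ex)
  have dec: "y \<in> RB A \<or> length y \<noteq> 1 \<Longrightarrow> dec A y \<in> sR A" for y
    using r0 by (auto simp: dec_def RB_def length_Suc_conv split: list.split sum.split)
  show ?thesis unfolding is_pca_def is_sca_def
  proof (intro conjI allI impI)
    show "finite (sQ (B A))" using assms by (auto simp: B_def QB_def is_sca_def)
    show "sQ (B A) \<noteq> {}" using assms by (auto simp: B_def QB_def is_sca_def)
    show "finite (sR (B A))" using assms by (auto simp: B_def RB_def is_sca_def)
    show "sR (B A) \<noteq> {}" using assms by (auto simp: B_def RB_def is_sca_def)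
    show "distinct (sV (B A))" by (simp add: B_def W_def)
    show "distinct (sV' (B A))" by (simp add: B_def)
    show "sV' (B A) = [0]" by (simp add: B_def)
    fix xs ys :: "('q+'r) list list"
    assume h: "length xs = length (sV (B A)) \<and> set xs \<subseteq> sQ (B A) \<and> length ys = length (sV' (B A)) \<and> set ys \<subseteq> sR (B A)"
    have mem: "v \<in> set (W A) \<Longrightarrow> xs ! idx (W A) v \<in> QB A" for v
      using h idx_less[of v "W A"] nth_mem[of "idx (W A) v" xs] by (auto simp: B_def)
    have gq: "v \<in> set (W A) \<Longrightarrow> getq A (xs ! idx (W A) v) \<in> sQ A" for v
      using mem[of v] by (auto simp: QB_def getq_def)
    have gr: "v \<in> set (W A) \<Longrightarrow> getr A (xs ! idx (W A) v) \<in> sR A" for v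
      using mem[of v] dec r0 by (auto simp: QB_def getr_def dec_def)
    show "sf (B A) xs ys \<in> sQ (B A)"
    proof (cases "length (xs ! idx (W A) 0) = 1")
      case True
      have "xs ! idx (W A) 0 \<in> QB A" using mem by (simp add: W_def)
      moreover obtain y where "ys = [y]" "y \<in> RB A" using h by (auto simp: B_def length_Suc_conv)
      ultimately show ?thesis using True by (auto simp: B_def fB_def QB_def RB_def)
    next
      case False
      have "sf A (map (\<lambda>v. getq A (xs ! idx (W A) v)) (sV A)) (map (\<lambda>v. getr A (xs ! idx (W A) v)) (sV' A)) \<in> sQ A"
      proof -
        have VW: "v \<in> set (sV A) \<Longrightarrow> v \<in> set (W A)" "v \<in> set (sV' A) \<Longrightarrow> v \<in> set (W A)" for v
          by (auto simp: W_def)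
        have "set (map (\<lambda>v. getq A (xs ! idx (W A) v)) (sV A)) \<subseteq> sQ A" using gq VW by auto
        moreover have "set (map (\<lambda>v. getr A (xs ! idx (W A) v)) (sV' A)) \<subseteq> sR A" using gr VW by auto
        ultimately show ?thesis using assms unfolding is_sca_def by auto
      qed
      then show ?thesis using False by (auto simp: B_def fB_def QB_def)
    qed
  qed
qed

lemma stepA: "gF (rescale A 1 1 0) c s = (\<lambda>z. [sf A (map (\<lambda>v. c (z+v) ! 0) (sV A)) (map (\<lambda>v. s (z+v) ! 0 ! 0) (sV' A))])"
  by (simp add: rescale_def glob_def)

lemma stepB:
  fixes A :: "('q,'r) sca" and c0 :: "int \<Rightarrow> 'q list"
  assumes c0: "c0 \<in> configs (tuples 1 (sQ A))" and s: "s \<in> configs (tuples 2 (tuples 1 (RB A)))"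
  shows "gF (rescale (B A) 1 2 0) (iB \<circ> c0) s
     = (\<lambda>z. iB [sf A (map (\<lambda>v. c0 (z+v) ! 0) (sV A)) (map (\<lambda>v. dec A (s (z+v) ! 0 ! 0)) (sV' A))])"
proof -
  have c0z: "c0 z = [c0 z ! 0]" for z
  proof -
    have "c0 z \<in> tuples 1 (sQ A)" using c0 by (simp add: configs_def)
    then show ?thesis by (auto simp: tuples_def length_Suc_conv)
  qed
  have sz: "\<exists>r. s z ! 0 ! 0 = [Inr r]" for z
  proof -
    have "s z \<in> tuples 2 (tuples 1 (RB A))" using s by (simp add: configs_def)
    then show ?thesis by (auto simp: tuples2 tuples1' RB_def)
  qed
  define X where "X = (\<lambda>z. [Inl (c0 z ! 0)] :: ('q+'r) list)"
  have c0z': "map Inl (c0 z) = ([Inl (c0 z ! 0)] :: ('q+'r) list)" for z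
    by (subst c0z) simp
  have X: "unblock (Suc 0) (iB \<circ> c0) = X"
    by (rule ext) (simp add: X_def iB_def c0z')
  have W0: "0 \<in> set (W A)" and WV: "v \<in> set (sV A) \<Longrightarrow> v \<in> set (W A)"
    and WV': "v \<in> set (sV' A) \<Longrightarrow> v \<in> set (W A)" for v by (auto simp: W_def)
  have st1: "glob (B A) X (\<lambda>z. s z ! 0 ! 0) = (\<lambda>z. Inl (c0 z ! 0) # s z ! 0 ! 0)"
    by (rule ext) (simp add: glob_def B_def fB_def W0 X_def)
  have sz1: "s z ! 0 ! 0 \<noteq> []" for z using sz[of z] by auto
  have len: "length (Inl (c0 z ! 0) # s z ! 0 ! 0) = 2" for z using sz[of z] by auto
  have st2: "glob (B A) (\<lambda>z. Inl (c0 z ! 0) # s z ! 0 ! 0) (\<lambda>z. s z ! 1 ! 0)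
     = (\<lambda>z. [Inl (sf A (map (\<lambda>v. c0 (z+v) ! 0) (sV A)) (map (\<lambda>v. dec A (s (z+v) ! 0 ! 0)) (sV' A)))])"
    apply (rule ext)
    apply (simp add: glob_def B_def fB_def sz1 W0)
    apply (intro arg_cong2[where f="sf A"] map_cong refl)
    apply (auto simp: WV WV' getq_def getr_def)
    done
  show ?thesis
    using st1 st2 by (simp add: rescale_def numeral_2_eq_2 iB_def c0z' X_def)
qed


lemma ennreal_div_cancel: assumes "n > 0" shows "(of_nat (a * n) :: ennreal) / of_nat (n * n) = of_nat a / of_nat n"
proof -
  have "(of_nat (a * n) :: ennreal) / of_nat (n * n) = ennreal (real (a*n) / real (n*n))"
    using assms by (simp add: ennreal_of_nat_eq_real_of_nat divide_ennreal)
  also have "real (a*n) / real (n*n) = real a / real n" using assms by simp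
  also have "ennreal (real a / real n) = of_nat a / of_nat n"
    using assms by (simp add: ennreal_of_nat_eq_real_of_nat divide_ennreal)
  finally show ?thesis .
qed

lemma uc_meas:
  fixes A :: "('q,'r) sca"
  assumes decI: "\<And>r. dec A [Inr r] = r"
  shows "(\<lambda>x. [[dec A (x ! 0 ! 0)]]) \<in> measurable (uniform_count_measure (tuples 2 (tuples 1 (RB A)))) (uniform_count_measure (tuples 1 (tuples 1 (sR A))))"
proof -
  let ?R = "sR A"
  have GA: "tuples 1 (tuples 1 ?R) = (\<lambda>r. [[r]]) ` ?R" by (auto simp: tuples1')
  have GB: "tuples 2 (tuples 1 (RB A)) = (\<lambda>(r::'r, r'::'r). [[[Inr r]],[[Inr r']]] :: ('q+'r) list list list) ` (?R \<times> ?R)"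
    by (auto simp: tuples2 tuples1' RB_def image_image)
  have mc: "measurable (uniform_count_measure (tuples 2 (tuples 1 (RB A)))) (uniform_count_measure (tuples 1 (tuples 1 (sR A))))
     = measurable (count_space (tuples 2 (tuples 1 (RB A)))) (count_space (tuples 1 (tuples 1 (sR A))))"
    by (intro measurable_cong_sets sets_uniform_count_measure_count_space)
  have "(\<lambda>x. [[dec A (x ! 0 ! 0)]]) \<in> measurable (count_space (tuples 2 (tuples 1 (RB A)))) (count_space (tuples 1 (tuples 1 (sR A))))"
    unfolding measurable_count_space_eq1 space_count_space GA GB
    by (auto simp: decI)
  then show ?thesis by (subst mc)
qed

lemma uc_dist:
  fixes A :: "('q,'r) sca"
  assumes fin: "finite (sR A)" and ne: "sR A \<noteq> {}"
    and decI: "\<And>r. dec A [Inr r] = r"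
  shows "distr (uniform_count_measure (tuples 2 (tuples 1 (RB A))))
               (uniform_count_measure (tuples 1 (tuples 1 (sR A))))
               (\<lambda>x. [[dec A (x ! 0 ! 0)]])
       = uniform_count_measure (tuples 1 (tuples 1 (sR A)))"
proof -
  let ?R = "sR A"
  define e where "e = (\<lambda>(r::'r, r'::'r). [[[Inr r]],[[Inr r']]] :: ('q+'r) list list list)"
  have GA: "tuples 1 (tuples 1 ?R) = (\<lambda>r. [[r]]) ` ?R" by (auto simp: tuples1')
  have GB: "tuples 2 (tuples 1 (RB A)) = e ` (?R \<times> ?R)"
    by (auto simp: tuples2 tuples1' RB_def e_def image_image)
  have GA': "tuples (Suc 0) (tuples (Suc 0) ?R) = (\<lambda>r. [[r]]) ` ?R" using GA by simp
  have GB': "tuples 2 (tuples (Suc 0) (RB A)) = e ` (?R \<times> ?R)" using GB by simp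
  have inje: "inj_on e S" for S by (auto simp: inj_on_def e_def)
  have meas: "(\<lambda>x. [[dec A (x ! 0 ! 0)]]) \<in> measurable (uniform_count_measure (tuples 2 (tuples 1 (RB A)))) (uniform_count_measure (tuples 1 (tuples 1 (sR A))))"
  proof -
    have mc: "measurable (uniform_count_measure (tuples 2 (tuples 1 (RB A)))) (uniform_count_measure (tuples 1 (tuples 1 (sR A))))
       = measurable (count_space (tuples 2 (tuples 1 (RB A)))) (count_space (tuples 1 (tuples 1 (sR A))))"
      by (intro measurable_cong_sets sets_uniform_count_measure_count_space)
    have "(\<lambda>x. [[dec A (x ! 0 ! 0)]]) \<in> measurable (count_space (tuples 2 (tuples 1 (RB A)))) (count_space (tuples 1 (tuples 1 (sR A))))"
      unfolding measurable_count_space_eq1 space_count_space GA GB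
      by (auto simp: e_def decI)
    then show ?thesis by (subst mc)
  qed
  show ?thesis
  proof (rule measure_eqI)
    show "sets (distr (uniform_count_measure (tuples 2 (tuples 1 (RB A)))) (uniform_count_measure (tuples 1 (tuples 1 (sR A)))) (\<lambda>x. [[dec A (x ! 0 ! 0)]])) = sets (uniform_count_measure (tuples 1 (tuples 1 (sR A))))" by simp
    fix X assume "X \<in> sets (distr (uniform_count_measure (tuples 2 (tuples 1 (RB A)))) (uniform_count_measure (tuples 1 (tuples 1 (sR A)))) (\<lambda>x. [[dec A (x ! 0 ! 0)]]))"
    then have X: "X \<subseteq> (\<lambda>r. [[r]]) ` ?R" by (simp add: sets_uniform_count_measure GA')
    define S where "S = {r \<in> ?R. [[r]] \<in> X}"
    have XS: "X = (\<lambda>r. [[r]]) ` S" using X by (auto simp: S_def)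
    have pre: "(\<lambda>x. [[dec A (x ! 0 ! 0)]]) -` X \<inter> space (uniform_count_measure (tuples 2 (tuples 1 (RB A)))) = e ` (S \<times> ?R)"
      by (auto simp: space_uniform_count_measure GB' e_def decI S_def)
    have finS: "finite S" using fin by (simp add: S_def)
    have "emeasure (distr (uniform_count_measure (tuples 2 (tuples 1 (RB A)))) (uniform_count_measure (tuples 1 (tuples 1 (sR A)))) (\<lambda>x. [[dec A (x ! 0 ! 0)]])) X
        = emeasure (uniform_count_measure (tuples 2 (tuples 1 (RB A)))) (e ` (S \<times> ?R))"
      unfolding pre[symmetric] using \<open>X \<in> _\<close> by (intro emeasure_distr[OF meas]) simp
    also have "\<dots> = ennreal (real (card S * card ?R) / real (card ?R * card ?R))"
    proof -
      have c1: "card (e ` (S \<times> ?R)) = card S * card ?R" by (simp add: card_image[OF inje] card_cartesian_product)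
      have c2: "card (e ` (?R \<times> ?R)) = card ?R * card ?R" by (simp add: card_image[OF inje] card_cartesian_product)
      have sub: "e ` (S \<times> ?R) \<subseteq> e ` (?R \<times> ?R)" by (auto simp: S_def)
      show ?thesis unfolding GB
        apply (subst emeasure_uniform_count_measure[OF _ sub])
         apply (simp add: fin)
        apply (simp only: c1 c2)
        done
    qed
    also have "\<dots> = ennreal (real (card S) / real (card ?R))"
      using fin ne by (simp add: card_gt_0_iff)
    also have "\<dots> = emeasure (uniform_count_measure (tuples 1 (tuples 1 (sR A)))) X"
    proof -
      have c3: "card X = card S" unfolding XS by (rule card_image) (auto simp: inj_on_def)
      have c4: "card ((\<lambda>r. [[r]]) ` ?R) = card ?R" by (rule card_image) (auto simp: inj_on_def)
      show ?thesis unfolding GA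
        apply (subst emeasure_uniform_count_measure[OF _ X])
         apply (simp add: fin)
        apply (simp only: c3 c4)
        done
    qed
    finally show "emeasure (distr (uniform_count_measure (tuples 2 (tuples 1 (RB A)))) (uniform_count_measure (tuples 1 (tuples 1 (sR A)))) (\<lambda>x. [[dec A (x ! 0 ! 0)]])) X = emeasure (uniform_count_measure (tuples 1 (tuples 1 (sR A)))) X" .
  qed
qed


lemma gQ_rescale[simp]: "gQ (rescale A m t k) = tuples m (sQ A)" by (simp add: rescale_def)
lemma gR_rescale[simp]: "gR (rescale A m t k) = tuples t (tuples m (sR A))" by (simp add: rescale_def)

lemma map_meas:
  assumes fin: "finite S"
  shows "(\<lambda>s. map (\<lambda>v. s (g v)) L) \<in> measurable (PiM UNIV (\<lambda>_::int. uniform_count_measure S)) (count_space (tuples (length L) S))"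
proof (induction L)
  case Nil
  show ?case by (simp add: tuples_def)
next
  case (Cons v L)
  have comp: "(\<lambda>s. s (g v)) \<in> measurable (PiM UNIV (\<lambda>_::int. uniform_count_measure S)) (count_space S)"
    using measurable_component_singleton[of "g v" UNIV "\<lambda>_::int. uniform_count_measure S"]
    by (simp add: measurable_cong_sets[OF refl sets_uniform_count_measure_count_space])
  have f: "(\<lambda>s. i # map (\<lambda>v. s (g v)) L) \<in> measurable (PiM UNIV (\<lambda>_::int. uniform_count_measure S)) (count_space (tuples (length (v # L)) S))"
    if "i \<in> S" for i
  proof (rule measurable_compose[OF Cons.IH])
    show "(#) i \<in> measurable (count_space (tuples (length L) S)) (count_space (tuples (length (v # L)) S))"
      using that by (auto simp: tuples_def)
  qed
  show ?case
    using measurable_compose_countable'[where f="\<lambda>i s. i # map (\<lambda>v. s (g v)) L", OF f comp] fin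
    by (simp add: countable_finite)
qed

lemma measA:
  fixes A :: "('q,'r) sca"
  assumes sca: "is_sca A" and c: "c \<in> configs (tuples 1 (sQ A))"
  shows "gF (rescale A 1 1 0) c \<in> measurable (PiM UNIV (\<lambda>_::int. uniform_count_measure (tuples 1 (tuples 1 (sR A)))))
            (PiM UNIV (\<lambda>_::int. count_space (tuples 1 (sQ A))))"
proof -
  let ?GA = "tuples 1 (tuples 1 (sR A))"
  have finGA: "finite ?GA" using sca by (simp add: tuples1' is_sca_def)
  have cz: "c z ! 0 \<in> sQ A" for z
  proof -
    have "c z \<in> tuples 1 (sQ A)" using c by (simp add: configs_def)
    then show ?thesis by (auto simp: tuples1')
  qed
  have coord: "(\<lambda>s. [sf A (map (\<lambda>v. c (z+v) ! 0) (sV A)) (map (\<lambda>v. s (z+v) ! 0 ! 0) (sV' A))])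
      \<in> measurable (PiM UNIV (\<lambda>_::int. uniform_count_measure ?GA)) (count_space (tuples 1 (sQ A)))" for z
  proof -
    have h: "(\<lambda>l. [sf A (map (\<lambda>v. c (z+v) ! 0) (sV A)) (map (\<lambda>x. x ! 0 ! 0) l)])
       \<in> measurable (count_space (tuples (length (sV' A)) ?GA)) (count_space (tuples 1 (sQ A)))"
    proof -
      have "[sf A (map (\<lambda>v. c (z+v) ! 0) (sV A)) (map (\<lambda>x. x ! 0 ! 0) l)] \<in> tuples 1 (sQ A)"
        if l: "l \<in> tuples (length (sV' A)) ?GA" for l
      proof -
        have "\<forall>x\<in>set l. x \<in> ?GA" using l unfolding tuples_def[of "length (sV' A)"] by auto
        then have "set (map (\<lambda>x. x ! 0 ! 0) l) \<subseteq> sR A" by (auto simp: tuples1')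
        moreover have "set (map (\<lambda>v. c (z+v) ! 0) (sV A)) \<subseteq> sQ A" using cz by auto
        ultimately show ?thesis using sca l unfolding is_sca_def by (auto simp: tuples_def)
      qed
      then show ?thesis by auto
    qed
    show ?thesis
      using measurable_compose[OF map_meas[OF finGA, of "\<lambda>v. z + v" "sV' A"] h] by (simp add: comp_def)
  qed
  show ?thesis unfolding stepA
  proof (rule measurable_PiM_single')
    fix z :: int
    show "(\<lambda>s. [sf A (map (\<lambda>v. c (z+v) ! 0) (sV A)) (map (\<lambda>v. s (z+v) ! 0 ! 0) (sV' A))])
      \<in> measurable (PiM UNIV (\<lambda>_::int. uniform_count_measure ?GA)) (count_space (tuples 1 (sQ A)))"
      by (rule coord)
  next
    show "(\<lambda>s z. [sf A (map (\<lambda>v. c (z+v) ! 0) (sV A)) (map (\<lambda>v. s (z+v) ! 0 ! 0) (sV' A))])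
      \<in> space (PiM UNIV (\<lambda>_::int. uniform_count_measure ?GA)) \<rightarrow> (\<Pi>\<^sub>E z\<in>UNIV. space (count_space (tuples 1 (sQ A))))"
      using measurable_space[OF coord] by auto
  qed
qed


theorem theorem3:
  fixes A :: "('q, 'r) sca"
  assumes "is_sca A"
  shows "\<exists>(B :: (('q + 'r) list, ('q + 'r) list) sca) i. is_pca B \<and> simulates_S A B i"
proof (intro exI conjI)
  let ?i = "iB :: 'q list \<Rightarrow> ('q+'r) list list"
  note sca = assms
  show "is_pca (B A)" by (rule B_sca[OF sca])
  have r0: "r0 A \<in> sR A" using sca unfolding r0_def is_sca_def by (auto intro: someI_ex)
  have decI: "\<And>r. dec A [Inr r] = r" by (simp add: dec_def)
  let ?Q' = "tuples 1 (sQ A)"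
  let ?GA = "tuples 1 (tuples 1 (sR A))"
  let ?GB = "tuples 2 (tuples 1 (RB A))"
  let ?G = "rescale (B A) 1 2 0"
  have finR: "finite (sR A)" and neR: "sR A \<noteq> {}" using sca by (auto simp: is_sca_def)
  have GA: "?GA = (\<lambda>r. [[r]]) ` sR A" by (auto simp: tuples1')
  have GB: "?GB = (\<lambda>(r, r'). [[[Inr r]],[[Inr r']]]) ` (sR A \<times> sR A)"
    by (auto simp: tuples2 tuples1' RB_def image_image)
  have GA': "tuples (Suc 0) (tuples (Suc 0) (sR A)) = (\<lambda>r. [[r]]) ` sR A" using GA by simp
  have GB': "tuples 2 (tuples (Suc 0) (RB A)) = (\<lambda>(r, r'). [[[Inr r]],[[Inr r']]]) ` (sR A \<times> sR A)" using GB by simp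
  have finGA: "finite ?GA" "?GA \<noteq> {}" using finR neR unfolding GA by auto
  have finGB: "finite ?GB" "?GB \<noteq> {}" using finR neR unfolding GB by auto
  have gRG: "gR ?G = ?GB" by (simp add: B_def)
  have injB: "inj_on ?i ?Q'" by (auto simp: inj_on_def iB_def)
  have decR: "dec A (s z ! 0 ! 0) \<in> sR A" if "s \<in> configs ?GB" for s z
  proof -
    have "s z \<in> ?GB" using that by (simp add: configs_def)
    then show ?thesis by (auto simp: GB' decI)
  qed
  have sfQ: "[sf A (map (\<lambda>v. c0 (z+v) ! 0) (sV A)) (map (\<lambda>v. dec A (s (z+v) ! 0 ! 0)) (sV' A))] \<in> ?Q'"
    if c0: "c0 \<in> configs ?Q'" and s: "s \<in> configs ?GB" for c0 s z
  proof -
    have "c0 z ! 0 \<in> sQ A" for z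
    proof -
      have "c0 z \<in> ?Q'" using c0 by (simp add: configs_def)
      then show ?thesis by (auto simp: tuples1')
    qed
    then have "set (map (\<lambda>v. c0 (z+v) ! 0) (sV A)) \<subseteq> sQ A" by auto
    moreover have "set (map (\<lambda>v. dec A (s (z+v) ! 0 ! 0)) (sV' A)) \<subseteq> sR A" using decR[OF s] by auto
    ultimately show ?thesis using sca unfolding is_sca_def by (auto simp: tuples1')
  qed
  have restr: "is_restriction ?G ?Q' ?i"
    unfolding is_restriction_def
  proof (intro conjI ballI)
    show "inj_on ?i ?Q'" by (rule injB)
    show "?i ` ?Q' \<subseteq> gQ ?G" by (auto simp: tuples1' iB_def B_def QB_def)
    fix c s assume c: "c \<in> configs (?i ` ?Q')" and s: "s \<in> configs (gR ?G)"
    define c0 where "c0 = (\<lambda>z. the_inv_into ?Q' ?i (c z))"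
    have cz: "c z \<in> ?i ` ?Q'" for z using c unfolding configs_def by blast
    have c0: "c0 \<in> configs ?Q'" unfolding configs_def c0_def
      using the_inv_into_into[OF injB cz subset_refl] by blast
    have cc: "c = ?i \<circ> c0"
      unfolding c0_def comp_def using f_the_inv_into_f[OF injB cz] by simp
    have s': "s \<in> configs ?GB" using s gRG by simp
    show "gF ?G c s \<in> configs (?i ` ?Q')"
      unfolding cc stepB[OF c0 s'] using sfQ[OF c0 s'] by (auto simp: configs_def)
  qed
  show "simulates_S A (B A) ?i"
    unfolding simulates_S_def
  proof (intro exI conjI ballI)
    show "(1::nat) \<ge> 1" "(1::nat) \<ge> 1" "(1::nat) \<ge> 1" "(2::nat) \<ge> 1" by simp_all
    show "is_restriction ?G (gQ (rescale A 1 1 0)) ?i" using restr by simp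
    fix c assume "c \<in> configs (gQ (rescale A 1 1 0))"
    then have c: "c \<in> configs ?Q'" by simp
    define \<pi> where "\<pi> = (\<lambda>x::('q+'r) list list list. [[dec A (x ! 0 ! 0)]])"
    define \<mu>A where "\<mu>A = PiM (UNIV::int set) (\<lambda>_. uniform_count_measure ?GA)"
    define \<mu>B where "\<mu>B = PiM (UNIV::int set) (\<lambda>_. uniform_count_measure ?GB)"
    define N where "N = PiM (UNIV::int set) (\<lambda>_. count_space ?Q')"
    have ucd: "distr (uniform_count_measure ?GB) (uniform_count_measure ?GA) \<pi> = uniform_count_measure ?GA"
      unfolding \<pi>_def by (rule uc_dist[OF finR neR decI])
    have \<pi>meas: "\<pi> \<in> measurable (uniform_count_measure ?GB) (uniform_count_measure ?GA)"
      unfolding \<pi>_def by (rule uc_meas[OF decI])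
    have Pmeas: "(\<lambda>s i. \<pi> (s i)) \<in> measurable \<mu>B \<mu>A"
      unfolding \<mu>A_def \<mu>B_def by (rule measurable_PiM_map[OF \<pi>meas])
    have Pd: "distr \<mu>B \<mu>A (\<lambda>s i. \<pi> (s i)) = \<mu>A"
      unfolding \<mu>A_def \<mu>B_def
      by (rule distr_PiM_UNIV_map[OF prob_space_uniform_count_measure[OF finGB] prob_space_uniform_count_measure[OF finGA] \<pi>meas ucd])
    have Gmeas: "gF (rescale A 1 1 0) c \<in> measurable \<mu>A N"
      unfolding \<mu>A_def N_def by (rule measA[OF sca c])
    have eqF: "(\<lambda>z. the_inv_into ?Q' ?i (gF ?G (?i \<circ> c) s z)) = gF (rescale A 1 1 0) c (\<lambda>i. \<pi> (s i))"
      if "s \<in> space \<mu>B" for s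
    proof -
      have s: "s \<in> configs ?GB" using that by (auto simp: \<mu>B_def space_PiM configs_def space_uniform_count_measure PiE_iff)
      show ?thesis
        unfolding stepB[OF c s] stepA
      proof (rule ext)
        fix z
        show "the_inv_into ?Q' ?i (?i [sf A (map (\<lambda>v. c (z + v) ! 0) (sV A)) (map (\<lambda>v. dec A (s (z + v) ! 0 ! 0)) (sV' A))])
          = [sf A (map (\<lambda>v. c (z + v) ! 0) (sV A)) (map (\<lambda>v. \<pi> (s (z + v)) ! 0 ! 0) (sV' A))]"
          using the_inv_into_f_f[OF injB sfQ[OF c s, of z]] by (simp add: \<pi>_def)
      qed
    qed
    have "sgf (restrict ?G (gQ (rescale A 1 1 0)) ?i) c
        = distr \<mu>B N (\<lambda>s z. the_inv_into ?Q' ?i (gF ?G (?i \<circ> c) s z))"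
      by (simp add: sgf_def restrict_def \<mu>B_def N_def B_def)
    also have "\<dots> = distr \<mu>B N (\<lambda>s. gF (rescale A 1 1 0) c (\<lambda>i. \<pi> (s i)))"
      by (rule distr_cong[OF refl refl eqF])
    also have "\<dots> = distr (distr \<mu>B \<mu>A (\<lambda>s i. \<pi> (s i))) N (gF (rescale A 1 1 0) c)"
      using distr_distr[OF Gmeas Pmeas] by (simp add: comp_def)
    also have "\<dots> = distr \<mu>A N (gF (rescale A 1 1 0) c)" by (simp add: Pd)
    also have "\<dots> = sgf (rescale A 1 1 0) c"
      by (simp add: sgf_def \<mu>A_def N_def)
    finally show "sgf (rescale A 1 1 0) c = sgf (restrict ?G (gQ (rescale A 1 1 0)) ?i) c" by simp
  qed
qed

end
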